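(* Let $x_0,y_0$ be positive integers and let $\{(X_t,Y_t)\}_{t\ge 0}$ be the CA competition process with fitness ratio $r=1$ started at $(x_0,y_0)$. Let $N=\sum_{t=0}^\infty \mathbf{1}\{X_t=Y_t\}$ be the total number of ties. Then, as $n\to\infty$, \[ \mathbb{P}[N\ge n]\sim \frac{1}{2^{x_0+y_0-2}\,B(x_0,y_0)}\, n^{-1}, \] where $B(x,y)=\int_0^1 s^{x-1}(1-s)^{y-1}\,ds$ is the beta function.
   Context: The CA competition process with fitness ratio $r\ge 1$ started at $(x_0,y_0)$ is the discrete-time Markov chain $\{(X_t,Y_t)\}_{t\ge0}$ on $\{(x,y)\in\mathbb{Z}^2: x\ge1,y\ge1\}$ with $(X_0,Y_0)=(x_0,y_0)$ and transition probabilities: from $(x,y)$ it moves to $(x+1,y)$ with probability $\frac{rx}{rx+y}$ and to $(x,y+1)$ with probability $\frac{y}{rx+y}$. The notation $f(n)\sim g(n)$ means $\lim_{n\to\infty} f(n)/g(n)=1$. *)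

theory Defs
  imports "HOL-Probability.Probability" "HOL-Library.Landau_Symbols"
begin

text \<open>One step of the CA competition process with fitness ratio r, driven by a
  uniform random number u in [0,1]: from (x,y) move to (x+1,y) iff u < r x/(r x + y),
  which happens with probability r x/(r x + y); otherwise move to (x,y+1).\<close>
definition ca_step :: "real \<Rightarrow> nat \<times> nat \<Rightarrow> real \<Rightarrow> nat \<times> nat" where
  "ca_step r s u = (let x = fst s; y = snd s in
     if u < r * real x / (r * real x + real y) then (x + 1, y) else (x, y + 1))"

definition noise :: "real stream measure" where
  "noise = stream_space (uniform_measure lborel {0..1})"

fun ca_path :: "real \<Rightarrow> nat \<Rightarrow> nat \<Rightarrow> real stream \<Rightarrow> nat \<Rightarrow> nat \<times> nat" where
  "ca_path r x0 y0 \<omega> 0 = (x0, y0)"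
| "ca_path r x0 y0 \<omega> (Suc t) = ca_step r (ca_path r x0 y0 \<omega> t) (\<omega> !! t)"

definition num_ties :: "real \<Rightarrow> nat \<Rightarrow> nat \<Rightarrow> real stream \<Rightarrow> ennreal" where
  "num_ties r x0 y0 \<omega> =
     (\<Sum>t. if fst (ca_path r x0 y0 \<omega> t) = snd (ca_path r x0 y0 \<omega> t) then 1 else 0)"

end

theory Submission
  imports Defs "HOL-Real_Asymp.Real_Asymp"
begin


lemma ca_path_Stream:
  "ca_path r x y (u ## \<omega>) (Suc t) = ca_path r (fst (ca_step r (x,y) u)) (snd (ca_step r (x,y) u)) \<omega> t"
  by (induction t) auto

interpretation U: prob_space "uniform_measure lborel {0..1::real}"
  by (rule prob_space_uniform_measure) auto

lemma prob_space_noise: "prob_space noise"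
  unfolding noise_def by (rule U.prob_space_stream_space)

lemma space_noise: "space noise = UNIV"
  by (simp add: noise_def space_stream_space)

lemma meas_ca_path[measurable]: "(\<lambda>\<omega>. ca_path r x y \<omega> t) \<in> measurable noise (count_space UNIV)"
proof (induction t)
  case 0 then show ?case by simp
next
  case (Suc t)
  have m: "(\<lambda>\<omega>. \<omega> !! t) \<in> measurable noise borel"
    unfolding noise_def using measurable_snth[of t "uniform_measure lborel {0..1::real}"] by simp
  show ?case
    unfolding ca_path.simps ca_step_def Let_def
    apply (rule measurable_compose_countable'[where g="\<lambda>\<omega>. ca_path r x y \<omega> t"])
    using m Suc apply measurable
    done
qed

definition ties :: "nat \<Rightarrow> nat \<Rightarrow> real stream \<Rightarrow> nat \<Rightarrow> nat" where
 "ties x y \<omega> T = (\<Sum>t<T. if fst (ca_path 1 x y \<omega> t) = snd (ca_path 1 x y \<omega> t) then 1 else 0)"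

lemma meas_nat_add:
  fixes f g :: "'a \<Rightarrow> nat"
  assumes "f \<in> measurable M (count_space UNIV)" "g \<in> measurable M (count_space UNIV)"
  shows "(\<lambda>\<omega>. f \<omega> + g \<omega>) \<in> measurable M (count_space UNIV)"
  apply (rule measurable_compose_countable'[where g=f, OF _ assms(1)])
  apply (rule measurable_compose[OF assms(2)])
  apply simp_all
  done

lemma meas_ties[measurable]: "(\<lambda>\<omega>. ties x y \<omega> T) \<in> measurable noise (count_space UNIV)"
proof (induction T)
  case 0 then show ?case by (simp add: ties_def)
next
  case (Suc T)
  have e: "(\<lambda>\<omega>. ties x y \<omega> (Suc T)) = (\<lambda>\<omega>. ties x y \<omega> T + (if fst (ca_path 1 x y \<omega> T) = snd (ca_path 1 x y \<omega> T) then 1 else 0))"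
    by (simp add: ties_def)
  have "(\<lambda>\<omega>. (if fst (ca_path 1 x y \<omega> T) = snd (ca_path 1 x y \<omega> T) then 1 else 0::nat)) \<in> measurable noise (count_space UNIV)"
    apply (rule measurable_compose[OF meas_ca_path[of 1 x y T]])
    by simp
  then show ?case unfolding e by (intro meas_nat_add Suc)
qed

lemma ties_Stream: "ties x y (u ## \<omega>) (Suc T) =
   (if x = y then 1 else 0) + ties (fst (ca_step 1 (x,y) u)) (snd (ca_step 1 (x,y) u)) \<omega> T"
  unfolding ties_def by (subst sum.lessThan_Suc_shift) (simp del: ca_path.simps(2) add: ca_path_Stream)

definition Q :: "nat \<Rightarrow> nat \<Rightarrow> nat \<Rightarrow> nat \<Rightarrow> real" where
  "Q T x y n = measure noise {\<omega> \<in> space noise. n \<le> ties x y \<omega> T}"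

lemma sets_ties[measurable]: "{\<omega> \<in> space noise. n \<le> ties x y \<omega> T} \<in> sets noise"
  by measurable

lemma Q0: "Q 0 x y n = (if n = 0 then 1 else 0)"
  using prob_space_noise by (simp add: Q_def ties_def prob_space.prob_space)



lemma ennreal_div1[simp]: "(a::ennreal) / 1 = a"
  by (simp add: divide_ennreal_def)

lemma emeasure_lb_lt:
  assumes "0 \<le> c" "c \<le> 1"
  shows "emeasure lborel ({0..1::real} \<inter> {..<c}) = ennreal c"
proof -
  have "{0..1} \<inter> {..<c} = {0..<c}" using assms by auto
  then show ?thesis using assms by simp
qed

lemma emeasure_lb_ge:
  assumes "0 \<le> c" "c \<le> 1"
  shows "emeasure lborel ({0..1::real} \<inter> {c..}) = ennreal (1-c)"
proof -
  have "{0..1} \<inter> {c..} = {c..1}" using assms by auto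
  then show ?thesis using assms by simp
qed

lemma emeasure_U_lt:
  assumes "0 \<le> c" "c \<le> 1"
  shows "emeasure (uniform_measure lborel {0..1::real}) {..<c} = ennreal c"
proof -
  have "{0..1} \<inter> {..<c} = {0..<c}" using assms by auto
  then show ?thesis using assms by (simp add: emeasure_uniform_measure)
qed

lemma emeasure_U_ge:
  assumes "0 \<le> c" "c \<le> 1"
  shows "emeasure (uniform_measure lborel {0..1::real}) {c..} = ennreal (1 - c)"
proof -
  have "{0..1} \<inter> {c..} = {c..1}" using assms by auto
  then show ?thesis using assms by (simp add: emeasure_uniform_measure)
qed

lemma Q_Suc:
  assumes "x + y > 0"
  shows "Q (Suc T) x y n =
    real x / (real x + real y) * Q T (x+1) y (n - (if x = y then 1 else 0)) +
    real y / (real x + real y) * Q T x (y+1) (n - (if x = y then 1 else 0))"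
proof -
  define c where "c = real x / (real x + real y)"
  define m where "m = n - (if x = y then 1 else 0)"
  define A where "A = Q T (x+1) y m"
  define B where "B = Q T x (y+1) m"
  have c01: "0 \<le> c" "c \<le> 1" using assms by (auto simp: c_def divide_simps)
  have step: "ca_step 1 (x,y) u = (if u < c then (x+1,y) else (x,y+1))" for u
    by (simp add: ca_step_def c_def)
  have key: "\<P>(\<omega> in noise. n \<le> ties x y (u ## \<omega>) (Suc T)) = (if u < c then A else B)" for u
  proof -
    have "\<And>\<omega>. (n \<le> ties x y (u ## \<omega>) (Suc T)) = (m \<le> ties (fst (ca_step 1 (x,y) u)) (snd (ca_step 1 (x,y) u)) \<omega> T)"
      unfolding ties_Stream m_def by auto
    then show ?thesis by (simp add: step A_def B_def Q_def)
  qed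
  have "ennreal (Q (Suc T) x y n) = (\<integral>\<^sup>+u. ennreal (\<P>(\<omega> in noise. n \<le> ties x y (u ## \<omega>) (Suc T))) \<partial>uniform_measure lborel {0..1})"
    unfolding Q_def noise_def
    by (rule U.prob_stream_space) (use sets_ties[unfolded noise_def] in auto)
  also have "\<dots> = (\<integral>\<^sup>+u. ennreal A * indicator {..<c} u + ennreal B * indicator {c..} u \<partial>uniform_measure lborel {0..1})"
    by (intro nn_integral_cong) (auto simp: key indicator_def)
  also have "\<dots> = ennreal A * ennreal c + ennreal B * ennreal (1 - c)"
    using c01 by (subst nn_integral_add) (auto simp: emeasure_U_lt emeasure_U_ge emeasure_lb_lt emeasure_lb_ge nn_integral_cmult_indicator)
  also have "\<dots> = ennreal (c * A + (1 - c) * B)"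
  proof -
    have A0: "A \<ge> 0" "B \<ge> 0" by (auto simp: A_def B_def Q_def)
    have "ennreal (c * A + (1 - c) * B) = ennreal (c * A) + ennreal ((1 - c) * B)"
      using c01 A0 by (intro ennreal_plus) auto
    also have "\<dots> = ennreal A * ennreal c + ennreal B * ennreal (1 - c)"
      using c01 A0 by (simp add: ennreal_mult mult.commute)
    finally show ?thesis by simp
  qed
  finally have "Q (Suc T) x y n = c * A + (1 - c) * B"
    using c01 by (subst (asm) ennreal_inj) (auto simp: A_def B_def Q_def)
  moreover have "1 - c = real y / (real x + real y)"
  proof -
    have "real x + real y > 0" using assms by (metis add_pos_nonneg add_nonneg_pos gr0I of_nat_0_le_iff of_nat_0_less_iff add_gr_0)
    then show ?thesis by (simp add: c_def field_simps)
  qed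
  ultimately show ?thesis by (simp add: c_def A_def B_def m_def)
qed



lemma sum_ind_ennreal:
  fixes k :: nat
  shows "(\<Sum>t<k. (if P t then 1 else 0::ennreal)) = of_nat (\<Sum>t<k. (if P t then 1 else 0::nat))"
  by (induction k) auto

lemma num_ties_eq: "num_ties 1 x y \<omega> = (SUP T. of_nat (ties x y \<omega> T))"
  unfolding num_ties_def ties_def suminf_eq_SUP
  by (intro SUP_cong refl) (rule sum_ind_ennreal)

lemma num_ties_ge: "(of_nat n \<le> num_ties 1 x y \<omega>) \<longleftrightarrow> (\<exists>T. n \<le> ties x y \<omega> T)"
proof
  assume "\<exists>T. n \<le> ties x y \<omega> T"
  then obtain T where "n \<le> ties x y \<omega> T" by blast
  then have "(of_nat n::ennreal) \<le> of_nat (ties x y \<omega> T)" by simp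
  also have "\<dots> \<le> num_ties 1 x y \<omega>" unfolding num_ties_eq by (rule SUP_upper) auto
  finally show "of_nat n \<le> num_ties 1 x y \<omega>" .
next
  assume a: "of_nat n \<le> num_ties 1 x y \<omega>"
  show "\<exists>T. n \<le> ties x y \<omega> T"
  proof (rule ccontr)
    assume "\<not> ?thesis"
    then have lt0: "\<And>T. ties x y \<omega> T < n" by (meson not_le)
    have lt: "ties x y \<omega> T \<le> n - 1" for T using lt0[of T] by linarith
    have n: "n \<ge> 1" using lt0[of 0] by (simp add: ties_def)
    have "num_ties 1 x y \<omega> \<le> of_nat (n - 1)" unfolding num_ties_eq
      by (rule SUP_least) (use lt in simp)
    with a have "(of_nat n::ennreal) \<le> of_nat (n - 1)" by order
    with n show False by simp
  qed
qed

lemma ties_mono: "T \<le> T' \<Longrightarrow> ties x y \<omega> T \<le> ties x y \<omega> T'"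
  unfolding ties_def by (rule sum_mono2) auto

lemma Q_lim: "(\<lambda>T. Q T x y n) \<longlonglongrightarrow> measure noise {\<omega> \<in> space noise. num_ties 1 x y \<omega> \<ge> of_nat n}"
proof -
  interpret prob_space noise by (rule prob_space_noise)
  have "(\<lambda>T. measure noise {\<omega> \<in> space noise. n \<le> ties x y \<omega> T}) \<longlonglongrightarrow>
        measure noise (\<Union>T. {\<omega> \<in> space noise. n \<le> ties x y \<omega> T})"
    by (rule finite_Lim_measure_incseq) (auto simp: incseq_def intro: order.trans ties_mono)
  moreover have "(\<Union>T. {\<omega> \<in> space noise. n \<le> ties x y \<omega> T}) = {\<omega> \<in> space noise. num_ties 1 x y \<omega> \<ge> of_nat n}"
    by (auto simp: num_ties_ge)
  ultimately show ?thesis by (simp add: Q_def)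
qed

lemma Q_sym: "Q T x y n = Q T y x n"
proof (induction T arbitrary: x y n)
  case 0 then show ?case by (simp add: Q0)
next
  case (Suc T)
  show ?case
  proof (cases "x + y > 0")
    case True
    then show ?thesis using Suc by (simp add: Q_Suc add.commute eq_commute[of x y])
  next
    case False
    then show ?thesis by simp
  qed
qed



fun W :: "real \<Rightarrow> nat \<Rightarrow> int \<Rightarrow> nat \<Rightarrow> real" where
  "W p 0 d n = (if n = 0 then 1 else 0)"
| "W p (Suc T) d n = p * W p T (d+1) (n - (if d = 0 then 1 else 0))
     + (1-p) * W p T (d-1) (n - (if d = 0 then 1 else 0))"

definition beta :: "nat \<Rightarrow> nat \<Rightarrow> real \<Rightarrow> real" where
  "beta x y p = p^(x-1) * (1-p)^(y-1) / Beta (real x) (real y)"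

lemma Beta_pos: "x \<ge> 1 \<Longrightarrow> y \<ge> 1 \<Longrightarrow> Beta (real x) (real y) > 0"
  unfolding Beta_def by (intro divide_pos_pos mult_pos_pos Gamma_real_pos) auto

lemma Beta_int:
  assumes "x \<ge> 1" "y \<ge> 1"
  shows "((\<lambda>p. p^(x-1) * (1-p)^(y-1)) has_integral Beta (real x) (real y)) {0..1}"
proof -
  have "((\<lambda>t. t powr (real x - 1) * (1 - t) powr (real y - 1)) has_integral Beta (real x) (real y)) {0<..<1}"
    using has_integral_Beta_real[of "real x" "real y"] assms by (simp add: has_integral_Icc_iff_Ioo)
  then have "((\<lambda>p. p^(x-1) * (1-p)^(y-1)) has_integral Beta (real x) (real y)) {0<..<1}"
    by (rule has_integral_cong[THEN iffD1, rotated])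
       (use assms in \<open>auto simp: powr_realpow[symmetric] of_nat_diff\<close>)
  then show ?thesis by (simp add: has_integral_Icc_iff_Ioo)
qed

lemma beta_int:
  assumes "x \<ge> 1" "y \<ge> 1"
  shows "(beta x y has_integral 1) {0..1}"
proof -
  have "((\<lambda>p. p^(x-1) * (1-p)^(y-1) * (1 / Beta (real x) (real y))) has_integral
        Beta (real x) (real y) * (1 / Beta (real x) (real y))) {0..1}"
    by (rule has_integral_mult_left[OF Beta_int[OF assms]])
  moreover have "beta x y = (\<lambda>p. p^(x-1) * (1-p)^(y-1) * (1 / Beta (real x) (real y)))"
    by (simp add: fun_eq_iff beta_def)
  ultimately show ?thesis using Beta_pos[OF assms] by simp
qed

lemma beta_step_x:
  assumes "x \<ge> 1" "y \<ge> 1"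
  shows "real x / (real x + real y) * beta (x+1) y p = p * beta x y p"
proof -
  have B: "(real x + real y) * Beta (real x + 1) (real y) = real x * Beta (real x) (real y)"
    using assms by (intro Beta_plus1_left) auto
  have pos: "Beta (real x) (real y) > 0" "Beta (real x + 1) (real y) > 0"
    using Beta_pos[OF assms] Beta_pos[of "x+1" y] assms by (auto simp: add.commute)
  have "p ^ x = p * p^(x-1)" using assms by (cases x) auto
  then show ?thesis using B pos assms unfolding beta_def
    by (simp add: field_simps)
qed

lemma beta_step_y:
  assumes "x \<ge> 1" "y \<ge> 1"
  shows "real y / (real x + real y) * beta x (y+1) p = (1-p) * beta x y p"
proof -
  have B: "(real x + real y) * Beta (real x) (real y + 1) = real y * Beta (real x) (real y)"
    using assms by (intro Beta_plus1_right) auto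
  have pos: "Beta (real x) (real y) > 0" "Beta (real x) (real y + 1) > 0"
    using Beta_pos[OF assms] Beta_pos[of x "y+1"] assms by (auto simp: add.commute)
  have gen: "real y / (real x + real y) * (a * q ^ (y + 1 - 1) / Beta (real x) (real (y+1))) = q * (a * q ^ (y - 1) / Beta (real x) (real y))" for a q :: real
  proof -
    have "q ^ y = q * q^(y-1)" using assms by (cases y) auto
    then show ?thesis using B pos assms by (simp add: field_simps)
  qed
  show ?thesis unfolding beta_def using gen[of "p ^ (x - 1)" "1-p"] by simp
qed

lemma Q_mix:
  assumes "x \<ge> 1" "y \<ge> 1"
  shows "((\<lambda>p. beta x y p * W p T (int x - int y) n) has_integral Q T x y n) {0..1}"
  using assms
proof (induction T arbitrary: x y n)
  case 0
  then show ?case using beta_int[OF 0] by (auto simp: Q0)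
next
  case (Suc T)
  define m where "m = n - (if x = y then 1 else 0)"
  have I1: "((\<lambda>p. real x / (real x + real y) * (beta (x+1) y p * W p T (int x - int y + 1) m))
      has_integral real x / (real x + real y) * Q T (x+1) y m) {0..1}"
    using Suc.IH[of "x+1" y m] Suc.prems by (intro has_integral_mult_right) (auto simp: algebra_simps)
  have I2: "((\<lambda>p. real y / (real x + real y) * (beta x (y+1) p * W p T (int x - int y - 1) m))
      has_integral real y / (real x + real y) * Q T x (y+1) m) {0..1}"
    using Suc.IH[of x "y+1" m] Suc.prems by (intro has_integral_mult_right) (auto simp: algebra_simps)
  have "Q (Suc T) x y n = real x / (real x + real y) * Q T (x+1) y m + real y / (real x + real y) * Q T x (y+1) m"
    using Suc.prems by (simp add: Q_Suc m_def)
  moreover have "beta x y p * W p (Suc T) (int x - int y) n =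
     real x / (real x + real y) * (beta (x+1) y p * W p T (int x - int y + 1) m) +
     real y / (real x + real y) * (beta x (y+1) p * W p T (int x - int y - 1) m)" for p
  proof -
    have "real x / (real x + real y) * (beta (x+1) y p * W p T (int x - int y + 1) m) =
          p * beta x y p * W p T (int x - int y + 1) m"
      using beta_step_x[OF Suc.prems, of p] by (simp add: mult.assoc[symmetric])
    moreover have "real y / (real x + real y) * (beta x (y+1) p * W p T (int x - int y - 1) m) =
          (1-p) * beta x y p * W p T (int x - int y - 1) m"
      using beta_step_y[OF Suc.prems, of p] by (simp add: mult.assoc[symmetric])
    ultimately show ?thesis by (simp add: m_def algebra_simps)
  qed
  ultimately show ?case using has_integral_add[OF I1 I2] by simp
qed



definition rr :: "real \<Rightarrow> real" where "rr p = (1-p)/p"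

definition H :: "real \<Rightarrow> int \<Rightarrow> nat \<Rightarrow> real" where
  "H p d n = (if n = 0 then 1 else min 1 (rr p powr real_of_int d) * (2 * min p (1-p))^(n-1))"

lemma powr_ge1_iff: "0 < (r::real) \<Longrightarrow> (1 \<le> r powr e) \<longleftrightarrow> 0 \<le> e * ln r"
proof -
  assume "0 < r"
  then have "r powr e = exp (e * ln r)" by (simp add: powr_def)
  then show ?thesis by (simp only: one_le_exp_iff)
qed

lemma powr_le1_iff: "0 < (r::real) \<Longrightarrow> (r powr e \<le> 1) \<longleftrightarrow> e * ln r \<le> 0"
proof -
  assume "0 < r"
  then have "r powr e = exp (e * ln r)" by (simp add: powr_def)
  then show ?thesis by (simp only: exp_le_one_iff)
qed

lemma harm_aux:
  fixes a r p :: real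
  assumes "a > 0" "r > 0" "p * r = 1 - p"
    and "(a \<ge> 1 \<and> a/r \<ge> 1 \<and> a*r \<ge> 1) \<or> (a \<le> 1 \<and> a/r \<le> 1 \<and> a*r \<le> 1)"
  shows "min 1 a = p * min 1 (a*r) + (1-p) * min 1 (a/r)"
proof -
  have "(1-p) * (a/r) = (p*r) * (a/r)" using assms(3) by simp
  also have "\<dots> = p * a" using assms(2) by simp
  finally have e: "(1-p) * (a/r) = p * a" .
  have "p * (a*r) = a * (p*r)" by (simp add: ac_simps)
  also have "\<dots> = a * (1-p)" using assms(3) by simp
  finally have e2: "p * (a*r) = a * (1-p)" .
  from assms(4) show ?thesis
  proof
    assume "a \<ge> 1 \<and> a/r \<ge> 1 \<and> a*r \<ge> 1" then show ?thesis by (simp add: algebra_simps)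
  next
    assume "a \<le> 1 \<and> a/r \<le> 1 \<and> a*r \<le> 1"
    then have "min 1 a = a" "min 1 (a*r) = a*r" "min 1 (a/r) = a/r" by auto
    then show ?thesis using e e2 by (simp add: algebra_simps)
  qed
qed

lemma rr_pos: "0 < p \<Longrightarrow> p < 1 \<Longrightarrow> rr p > 0"
  by (simp add: rr_def)

lemma H_harm:
  assumes p: "0 < p" "p < 1" and n: "n \<ge> 1"
  shows "H p d n = p * H p (d+1) (n - (if d = 0 then 1 else 0)) + (1-p) * H p (d-1) (n - (if d = 0 then 1 else 0))"
proof -
  define r where "r = rr p"
  have r: "r > 0" using rr_pos[OF p] by (simp add: r_def)
  have pr: "p * r = 1 - p" using p by (simp add: r_def rr_def)
  define \<rho> where "\<rho> = 2 * min p (1-p)"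
  show ?thesis
  proof (cases "d = 0")
    case False
    define a where "a = r powr real_of_int d"
    have a: "a > 0" using r by (simp add: a_def)
    have ar: "r powr real_of_int (d+1) = a * r" using r by (simp add: a_def powr_add)
    have ar': "r powr real_of_int (d-1) = a / r" using r by (simp add: a_def powr_diff)
    have cases: "(a \<ge> 1 \<and> a/r \<ge> 1 \<and> a*r \<ge> 1) \<or> (a \<le> 1 \<and> a/r \<le> 1 \<and> a*r \<le> 1)"
    proof -
      have "d \<ge> 1 \<or> d \<le> -1" using False by linarith
      moreover have "ln r \<ge> 0 \<or> ln r \<le> 0" by linarith
      ultimately have "(real_of_int d * ln r \<ge> 0 \<and> real_of_int (d-1) * ln r \<ge> 0 \<and> real_of_int (d+1) * ln r \<ge> 0) \<or>
            (real_of_int d * ln r \<le> 0 \<and> real_of_int (d-1) * ln r \<le> 0 \<and> real_of_int (d+1) * ln r \<le> 0)"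
        by (auto intro: mult_nonneg_nonneg mult_nonpos_nonpos mult_nonneg_nonpos mult_nonpos_nonneg)
      then show ?thesis
        unfolding ar[symmetric] ar'[symmetric] unfolding a_def
        by (simp only: powr_ge1_iff[OF r] powr_le1_iff[OF r])
    qed
    have eq: "min 1 a = p * min 1 (a*r) + (1-p) * min 1 (a/r)" by (rule harm_aux[OF a r pr cases])
    have key: "min 1 a * K = p * (min 1 (a*r) * K) + (1-p) * (min 1 (a/r) * K)" for K
      by (subst eq) (simp add: algebra_simps)
    moreover have "H p d n = min 1 a * \<rho>^(n-1)" using n by (simp add: H_def a_def r_def \<rho>_def)
    moreover have "H p (d+1) n = min 1 (a*r) * \<rho>^(n-1)" using n
      unfolding H_def by (simp only: r_def[symmetric] \<rho>_def[symmetric] ar) simp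
    moreover have "H p (d-1) n = min 1 (a/r) * \<rho>^(n-1)" using n
      unfolding H_def by (simp only: r_def[symmetric] \<rho>_def[symmetric] ar') simp
    ultimately show ?thesis using False key by simp
  next
    case True
    show ?thesis
    proof (cases "n = 1")
      case True
      with \<open>d = 0\<close> show ?thesis using rr_pos[OF p] by (simp add: H_def)
    next
      case False
      then have n2: "n - 1 \<ge> 1" using n by simp
      have qr: "(1-p) / r = p" using pr r by (simp add: field_simps)
      have rho: "p * min 1 r + (1-p) * min 1 (1/r) = \<rho>"
      proof (cases "r \<ge> 1")
        case True
        then have m: "min 1 r = 1" "min 1 (1/r) = 1/r" by auto
        have "p * 1 \<le> p * r" using True p by (intro mult_left_mono) auto
        then have "p \<le> 1 - p" using pr by simp
        then have "\<rho> = 2 * p" by (simp add: \<rho>_def)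
        then show ?thesis using m qr by simp
      next
        case False
        then have m: "min 1 r = r" "min 1 (1/r) = 1" using r by auto
        have "p * r \<le> p * 1" using False p by (intro mult_left_mono) auto
        then have "1 - p \<le> p" using pr by simp
        then have "\<rho> = 2 * (1 - p)" by (simp add: \<rho>_def)
        then show ?thesis using m pr by simp
      qed
      have e1: "r powr real_of_int (1::int) = r" using r by simp
      have e2: "r powr real_of_int (-1::int) = 1/r" using r by (simp add: powr_minus_divide)
      have "\<rho>^(n-1) = \<rho> * \<rho>^(n-1-1)" using n2 by (cases "n-1") auto
      moreover have "H p 0 n = \<rho>^(n-1)" using n rr_pos[OF p] by (simp add: H_def \<rho>_def)
      moreover have "H p (0+1) (n-1) = min 1 r * \<rho>^(n-1-1)" using n2
        unfolding H_def by (simp only: r_def[symmetric] \<rho>_def[symmetric] e1 add_0) simp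
      moreover have "H p (0-1) (n-1) = min 1 (1/r) * \<rho>^(n-1-1)" using n2
        unfolding H_def by (simp only: r_def[symmetric] \<rho>_def[symmetric] e2 diff_0) simp
      moreover have key: "\<rho> * K = p*(min 1 r * K) + (1-p)*(min 1 (1/r) * K)" for K
        by (subst rho[symmetric]) (simp add: algebra_simps)
      ultimately show ?thesis using \<open>d = 0\<close> by simp
    qed
  qed
qed



lemma W_n0: "W p T d 0 = 1"
  by (induction T arbitrary: d) (auto simp: algebra_simps)

lemma W_nonneg: "0 \<le> p \<Longrightarrow> p \<le> 1 \<Longrightarrow> 0 \<le> W p T d n"
  by (induction T arbitrary: d n) auto

lemma rho_bounds: "0 < p \<Longrightarrow> p < 1 \<Longrightarrow> 0 \<le> 2 * min p (1-p) \<and> 2 * min p (1-p) \<le> (1::real)"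
  by (auto simp: min_def)

lemma H_nonneg: "0 < p \<Longrightarrow> p < 1 \<Longrightarrow> 0 \<le> H p d n"
  using rho_bounds[of p] by (auto simp: H_def)

lemma H_le1: "0 < p \<Longrightarrow> p < 1 \<Longrightarrow> H p d n \<le> 1"
proof -
  assume p: "0 < p" "p < 1"
  have "min 1 (rr p powr real_of_int d) * (2 * min p (1-p))^(n-1) \<le> 1 * 1"
    using rho_bounds[OF p] by (intro mult_mono power_le_one) auto
  then show ?thesis by (auto simp: H_def)
qed

lemma W_le_H:
  assumes p: "0 < p" "p < 1"
  shows "W p T d n \<le> H p d n"
proof (induction T arbitrary: d n)
  case 0 then show ?case using H_nonneg[OF p, of d n] by (cases "n = 0") (simp add: H_def, simp)
next
  case (Suc T)
  show ?case
  proof (cases "n = 0")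
    case True then show ?thesis by (simp add: H_def W_n0)
  next
    case False
    let ?m = "n - (if d = 0 then 1 else 0)"
    have "W p (Suc T) d n = p * W p T (d+1) ?m + (1-p) * W p T (d-1) ?m" by simp
    also have "\<dots> \<le> p * H p (d+1) ?m + (1-p) * H p (d-1) ?m"
      using Suc.IH p by (intro add_mono mult_left_mono) auto
    also have "\<dots> = H p d n" using H_harm[OF p, of n d] False by simp
    finally show ?thesis .
  qed
qed

lemma min_le_sqrt:
  fixes b :: real assumes "b > 0" shows "min 1 (b * b) \<le> b"
proof (cases "b \<ge> 1")
  case True then show ?thesis by simp
next
  case False
  then have "b * b \<le> b * 1" using assms by (intro mult_left_mono) auto
  then show ?thesis by simp
qed

lemma H_W_bound:
  assumes p: "0 < p" "p < 1"
  shows "H p d n - W p T d n \<le> rr p powr (real_of_int d / 2) * (2 * p * sqrt (rr p))^T"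
proof (induction T arbitrary: d n)
  case 0
  define b where "b = rr p powr (real_of_int d / 2)"
  have b: "b > 0" using rr_pos[OF p] by (simp add: b_def)
  have bb: "rr p powr real_of_int d = b * b"
    unfolding b_def powr_add[symmetric] by simp
  show ?case
  proof (cases "n = 0")
    case True then show ?thesis using b by (simp add: H_def b_def[symmetric])
  next
    case False
    have "H p d n = min 1 (rr p powr real_of_int d) * (2 * min p (1-p))^(n-1)"
      using False by (simp add: H_def)
    also have "\<dots> \<le> min 1 (rr p powr real_of_int d) * 1"
      using rho_bounds[OF p] by (intro mult_left_mono power_le_one) auto
    also have "\<dots> \<le> b" using min_le_sqrt[OF b] bb by simp
    finally show ?thesis using False by (simp add: b_def)
  qed
next
  case (Suc T)
  define r where "r = rr p"
  have r: "r > 0" using rr_pos[OF p] by (simp add: r_def)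
  define c where "c = 2 * p * sqrt r"
  have c: "c \<ge> 0" using p r by (simp add: c_def)
  define b where "b = r powr (real_of_int d / 2)"
  have b: "b > 0" using r by (simp add: b_def)
  have b1: "r powr (real_of_int (d+1) / 2) = b * sqrt r"
    using r by (simp add: b_def add_divide_distrib powr_add powr_half_sqrt)
  have b2: "r powr (real_of_int (d-1) / 2) = b / sqrt r"
    using r by (simp add: b_def diff_divide_distrib powr_diff powr_half_sqrt)
  have pr: "p * r = 1 - p" using p by (simp add: r_def rr_def)
  have sr: "sqrt r * sqrt r = r" using r by simp
  have key: "p * (b * sqrt r) + (1-p) * (b / sqrt r) = b * c"
  proof -
    have "(1-p) * (b / sqrt r) = (p * (sqrt r * sqrt r)) * (b / sqrt r)" using pr sr by simp
    also have "\<dots> = p * b * sqrt r" using r by (simp add: field_simps)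
    finally show ?thesis by (simp add: c_def algebra_simps)
  qed
  show ?case
  proof (cases "n = 0")
    case True
    have "0 \<le> b * c^(Suc T)" using b c by simp
    then show ?thesis using True by (simp add: H_def W_n0 r_def[symmetric] b_def[symmetric] c_def[symmetric])
  next
    case False
    let ?m = "n - (if d = 0 then 1 else 0)"
    have "H p d n - W p (Suc T) d n = p * (H p (d+1) ?m - W p T (d+1) ?m) + (1-p) * (H p (d-1) ?m - W p T (d-1) ?m)"
      using H_harm[OF p, of n d] False by (simp add: algebra_simps)
    also have "\<dots> \<le> p * (r powr (real_of_int (d+1) / 2) * c^T) + (1-p) * (r powr (real_of_int (d-1) / 2) * c^T)"
      using Suc.IH[of "d+1" ?m] Suc.IH[of "d-1" ?m] p
      by (intro add_mono mult_left_mono) (auto simp: r_def c_def)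
    also have "\<dots> = (p * (b * sqrt r) + (1-p) * (b / sqrt r)) * c^T"
      unfolding b1 b2 by (simp add: algebra_simps)
    also have "\<dots> = b * c^(Suc T)" unfolding key by simp
    finally show ?thesis by (simp add: b_def r_def c_def)
  qed
qed



definition Pn :: "nat \<Rightarrow> nat \<Rightarrow> nat \<Rightarrow> real" where
  "Pn x y n = measure noise {\<omega> \<in> space noise. num_ties 1 x y \<omega> \<ge> of_nat n}"

definition S :: "real set" where "S = {0<..<1} - {1/2}"

lemma spike_S:
  fixes f :: "real \<Rightarrow> real"
  shows "(f has_integral v) {0..1} \<longleftrightarrow> (f has_integral v) S"
proof (rule has_integral_spike_set_eq)
  have "{x \<in> {0..1} - S. f x \<noteq> 0} \<subseteq> {0, 1/2, 1}" by (auto simp: S_def)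
  then show "negligible {x \<in> {0..1} - S. f x \<noteq> 0}"
    by (rule negligible_subset[rotated]) (rule negligible_finite, simp)
  have "{x \<in> S - {0..1}. f x \<noteq> 0} = {}" by (auto simp: S_def)
  then show "negligible {x \<in> S - {0..1}. f x \<noteq> 0}" by (simp only: negligible_empty)
qed

lemma c_lt1:
  assumes p: "0 < p" "p < 1" "p \<noteq> 1/2"
  shows "2 * p * sqrt (rr p) < 1"
proof -
  define c where "c = 2 * p * sqrt (rr p)"
  have r: "rr p > 0" using rr_pos p by auto
  have c0: "c \<ge> 0" using p r by (simp add: c_def)
  have "c^2 = 4 * p^2 * rr p" using r by (simp add: c_def power_mult_distrib)
  also have "\<dots> = 4 * p * (1-p)" using p by (simp add: rr_def power2_eq_square)
  also have "\<dots> < 1"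
  proof -
    have "(2*p - 1)^2 > 0" using p by simp
    then show ?thesis by (simp add: power2_eq_square algebra_simps)
  qed
  finally have "c^2 < 1" .
  then have "c < 1" using c0 by (metis abs_of_nonneg abs_square_less_1)
  then show ?thesis by (simp add: c_def)
qed

lemma W_lim:
  assumes p: "p \<in> S"
  shows "(\<lambda>T. W p T d n) \<longlonglongrightarrow> H p d n"
proof -
  have p': "0 < p" "p < 1" "p \<noteq> 1/2" using p by (auto simp: S_def)
  define c where "c = 2 * p * sqrt (rr p)"
  have c: "0 \<le> c" "c < 1" using c_lt1[OF p'] p' rr_pos[of p] by (auto simp: c_def)
  have "(\<lambda>T. H p d n - W p T d n) \<longlonglongrightarrow> 0"
  proof (rule real_tendsto_sandwich[where f="\<lambda>_. 0" and h="\<lambda>T. rr p powr (real_of_int d / 2) * c^T"])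
    show "\<forall>\<^sub>F T in sequentially. 0 \<le> H p d n - W p T d n" using W_le_H[OF p'(1,2)] by simp
    show "\<forall>\<^sub>F T in sequentially. H p d n - W p T d n \<le> rr p powr (real_of_int d / 2) * c^T"
      using H_W_bound[OF p'(1,2)] by (simp add: c_def)
    show "(\<lambda>T. rr p powr (real_of_int d / 2) * c^T) \<longlonglongrightarrow> 0"
      using c by (intro tendsto_mult_right_zero LIMSEQ_power_zero) auto
  qed simp
  then have "(\<lambda>T. H p d n - (H p d n - W p T d n)) \<longlonglongrightarrow> H p d n - 0"
    by (intro tendsto_diff) auto
  then show ?thesis by simp
qed

lemma beta_nonneg: "x \<ge> 1 \<Longrightarrow> y \<ge> 1 \<Longrightarrow> 0 \<le> p \<Longrightarrow> p \<le> 1 \<Longrightarrow> 0 \<le> beta x y p"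
  using Beta_pos[of x y] by (simp add: beta_def)

lemma betaH_int:
  assumes "x \<ge> 1" "y \<ge> 1"
  shows "((\<lambda>p. beta x y p * H p (int x - int y) n) has_integral Pn x y n) S"
proof (rule has_integral_dominated_convergence[where f="\<lambda>T p. beta x y p * W p T (int x - int y) n"
      and y="\<lambda>T. Q T x y n" and h="beta x y"])
  show "((\<lambda>p. beta x y p * W p T (int x - int y) n) has_integral Q T x y n) S" for T
    using Q_mix[OF assms, of T n] spike_S by blast
  show "beta x y integrable_on S" using beta_int[OF assms] spike_S by blast
  show "\<forall>p\<in>S. norm (beta x y p * W p T (int x - int y) n) \<le> beta x y p" for T
  proof
    fix p assume p: "p \<in> S"
    then have p': "0 < p" "p < 1" by (auto simp: S_def)
    have "0 \<le> W p T (int x - int y) n" "W p T (int x - int y) n \<le> 1"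
      using W_nonneg[of p T] p' apply simp
      using W_le_H[OF p', of T "int x - int y" n] H_le1[OF p', of "int x - int y" n] by linarith
    moreover have "0 \<le> beta x y p" using beta_nonneg[OF assms] p' by auto
    ultimately show "norm (beta x y p * W p T (int x - int y) n) \<le> beta x y p"
      by (simp add: abs_mult mult_left_le)
  qed
  show "\<forall>p\<in>S. (\<lambda>T. beta x y p * W p T (int x - int y) n) \<longlonglongrightarrow> beta x y p * H p (int x - int y) n"
    using W_lim by (auto intro: tendsto_mult_left)
  show "(\<lambda>T. Q T x y n) \<longlonglongrightarrow> Pn x y n" unfolding Pn_def by (rule Q_lim)
qed

lemma Pn_sym: "Pn x y n = Pn y x n"
  using Q_lim[of x y n] Q_lim[of y x n] unfolding Pn_def Q_sym[of _ x y]
  by (rule LIMSEQ_unique)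



lemma int_mono1: "((\<lambda>p::real. p^m) has_integral ((1/2)^(m+1) / real (m+1))) {0..1/2}"
proof -
  have "((\<lambda>p::real. p^m) has_integral ((\<lambda>p. p^(m+1) / real (m+1)) (1/2) - (\<lambda>p. p^(m+1) / real (m+1)) 0)) {0..1/2}"
    apply (rule fundamental_theorem_of_calculus)
     apply simp
    apply (simp add: has_real_derivative_iff_has_vector_derivative[symmetric])
    apply (rule derivative_eq_intros refl | simp)+
    apply (cases m) apply (simp_all add: field_simps)
    done
  then show ?thesis by simp
qed

lemma int_mono2: "((\<lambda>p::real. (1-p)^m) has_integral ((1/2)^(m+1) / real (m+1))) {1/2..1}"
proof -
  have "((\<lambda>p::real. (1-p)^m) has_integral ((\<lambda>p. (-1) * (1-p)^(m+1) / real (m+1)) 1 - (\<lambda>p. (-1) * (1-p)^(m+1) / real (m+1)) (1/2))) {1/2..1}"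
    apply (rule fundamental_theorem_of_calculus)
     apply simp
    apply (simp add: has_real_derivative_iff_has_vector_derivative[symmetric])
    apply (rule derivative_eq_intros refl | simp)+
    apply (cases m) apply (simp_all add: field_simps)
    done
  then show ?thesis by simp
qed

definition coef :: "nat \<Rightarrow> nat \<Rightarrow> nat \<Rightarrow> real" where
  "coef y n k = real (y-1 choose k) * (-1)^k * 2^(n-1)"

lemma binexp:
  fixes p :: real
  assumes "x \<ge> 1" "n \<ge> 1"
  shows "p^(x-1) * (1-p)^(y-1) * (2*p)^(n-1) = (\<Sum>k\<le>y-1. coef y n k * p^(x+k+n-2))"
proof -
  have "(1-p)^(y-1) = (\<Sum>k\<le>y-1. real (y-1 choose k) * (-p)^k * 1^(y-1-k))"
    using binomial_ring[of "-p" 1 "y-1"] by simp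
  then have "p^(x-1) * (1-p)^(y-1) * (2*p)^(n-1) =
      (\<Sum>k\<le>y-1. p^(x-1) * (real (y-1 choose k) * (-p)^k) * (2*p)^(n-1))"
    by (simp add: sum_distrib_left sum_distrib_right)
  also have "\<dots> = (\<Sum>k\<le>y-1. coef y n k * p^(x+k+n-2))"
  proof (rule sum.cong[OF refl])
    fix k
    have e: "x + k + n - 2 = (x-1) + k + (n-1)" using assms by simp
    show "p^(x-1) * (real (y-1 choose k) * (-p)^k) * (2*p)^(n-1) = coef y n k * p^(x+k+n-2)"
      unfolding e coef_def power_add power_minus[of p] power_mult_distrib by (simp add: ac_simps)
  qed
  finally show ?thesis .
qed

definition V :: "nat \<Rightarrow> nat \<Rightarrow> nat \<Rightarrow> real" where
  "V x y n = (\<Sum>k\<le>y-1. coef y n k * ((1/2)^(x+k+n-2+1) / real (x+k+n-2+1)))"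

lemma int_piece1:
  assumes "x \<ge> 1" "n \<ge> 1"
  shows "((\<lambda>p. p^(x-1) * (1-p)^(y-1) * (2*p)^(n-1)) has_integral V x y n) {0..1/2}"
  unfolding binexp[OF assms] V_def
  by (intro has_integral_sum has_integral_mult_right int_mono1) auto

lemma int_piece2:
  assumes "x \<ge> 1" "n \<ge> 1"
  shows "((\<lambda>p. p^(y-1) * (1-p)^(x-1) * (2*(1-p))^(n-1)) has_integral V x y n) {1/2..1}"
proof -
  have e: "p^(y-1) * (1-p)^(x-1) * (2*(1-p))^(n-1) = (\<Sum>k\<le>y-1. coef y n k * (1-p)^(x+k+n-2))" for p :: real
    using binexp[OF assms, of "1-p"] by (simp add: ac_simps)
  show ?thesis
    unfolding e V_def
    by (intro has_integral_sum has_integral_mult_right int_mono2) auto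
qed



lemma betaH_left:
  assumes xy: "y \<le> x" "y \<ge> 1" and n: "n \<ge> 1" and p: "0 < p" "p < 1/2"
  shows "beta x y p * H p (int x - int y) n = p^(x-1) * (1-p)^(y-1) * (2*p)^(n-1) / Beta (real x) (real y)"
proof -
  have r: "rr p \<ge> 1" using p by (simp add: rr_def field_simps)
  have rp: "rr p > 0" using p by (simp add: rr_def)
  have "1 \<le> rr p powr real_of_int (int x - int y)"
    using rp r xy by (subst powr_ge1_iff) auto
  then have "min 1 (rr p powr real_of_int (int x - int y)) = 1" by simp
  moreover have "min p (1-p) = p" using p by simp
  ultimately show ?thesis using n by (simp add: H_def beta_def)
qed

lemma betaH_right:
  assumes xy: "y \<le> x" "y \<ge> 1" and n: "n \<ge> 1" and p: "1/2 < p" "p < 1"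
  shows "beta x y p * H p (int x - int y) n = p^(y-1) * (1-p)^(x-1) * (2*(1-p))^(n-1) / Beta (real x) (real y)"
proof -
  have r: "rr p \<le> 1" using p by (simp add: rr_def field_simps)
  have rp: "rr p > 0" using p by (simp add: rr_def)
  have e: "real_of_int (int x - int y) = real (x - y)" using xy by simp
  have "rr p powr real_of_int (int x - int y) \<le> 1"
    using rp r xy by (subst powr_le1_iff) (auto simp: mult_nonneg_nonpos)
  moreover have pw: "rr p powr real_of_int (int x - int y) = rr p ^ (x - y)"
    using rp by (simp only: e powr_realpow)
  ultimately have "min 1 (rr p powr real_of_int (int x - int y)) = rr p ^ (x - y)"
    by simp
  moreover have "min p (1-p) = 1-p" using p by simp
  moreover have "p^(x-1) * (1-p)^(y-1) * rr p ^ (x - y) = p^(y-1) * (1-p)^(x-1)"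
  proof -
    have ex: "x - 1 = (y-1) + (x-y)" using xy by simp
    have "p^(x-1) * (1-p)^(y-1) * rr p ^ (x - y) = p^(y-1) * (1-p)^(y-1) * (p^(x-y) * ((1-p)/p)^(x-y))"
      unfolding ex power_add rr_def by (simp add: ac_simps)
    also have "p^(x-y) * ((1-p)/p)^(x-y) = (1-p)^(x-y)"
      using p by (simp add: power_divide)
    finally show ?thesis unfolding ex power_add by (simp add: ac_simps)
  qed
  ultimately show ?thesis using n by (simp add: H_def beta_def ac_simps)
qed

lemma Pn_formula:
  assumes xy: "y \<le> x" "y \<ge> 1" and n: "n \<ge> 1"
  shows "Pn x y n = 2 * V x y n / Beta (real x) (real y)"
proof -
  have x: "x \<ge> 1" using xy by simp
  define B where "B = Beta (real x) (real y)"
  have I1: "((\<lambda>p. beta x y p * H p (int x - int y) n) has_integral V x y n * (1/B)) {0<..<1/2}"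
  proof -
    have "((\<lambda>p. p^(x-1) * (1-p)^(y-1) * (2*p)^(n-1) * (1/B)) has_integral V x y n * (1/B)) {0<..<1/2}"
      using has_integral_mult_left[OF int_piece1[OF x n, of y], of "1/B"] by (simp only: has_integral_Icc_iff_Ioo)
    then show ?thesis
      by (rule has_integral_cong[THEN iffD1, rotated]) (auto simp: betaH_left[OF xy n] B_def)
  qed
  have I2: "((\<lambda>p. beta x y p * H p (int x - int y) n) has_integral V x y n * (1/B)) {1/2<..<1}"
  proof -
    have "((\<lambda>p. p^(y-1) * (1-p)^(x-1) * (2*(1-p))^(n-1) * (1/B)) has_integral V x y n * (1/B)) {1/2<..<1}"
      using has_integral_mult_left[OF int_piece2[OF x n, of y], of "1/B"] by (simp only: has_integral_Icc_iff_Ioo)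
    then show ?thesis
      by (rule has_integral_cong[THEN iffD1, rotated]) (auto simp: betaH_right[OF xy n] B_def)
  qed
  have "{0<..<1/2} \<union> {1/2<..<1} = S" by (auto simp: S_def)
  then have "((\<lambda>p. beta x y p * H p (int x - int y) n) has_integral V x y n * (1/B) + V x y n * (1/B)) S"
    using has_integral_Un[OF I1 I2] by simp
  moreover have "((\<lambda>p. beta x y p * H p (int x - int y) n) has_integral Pn x y n) S"
    by (rule betaH_int) (use xy in auto)
  ultimately have "Pn x y n = V x y n * (1/B) + V x y n * (1/B)" using has_integral_unique by blast
  then show ?thesis by (simp add: B_def)
qed



lemma V_simp:
  assumes "x \<ge> 1" "n \<ge> 1"
  shows "real n * V x y n = (\<Sum>k\<le>y-1. real (y-1 choose k) * (-1)^k * (1/2)^(x+k) * (real n / (real n + (real (x+k) - 1))))"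
  unfolding V_def sum_distrib_left
proof (rule sum.cong[OF refl])
  fix k
  have e1: "x + k + n - 2 + 1 = (x + k) + (n - 1)" using assms by simp
  have e2: "real ((x + k) + (n - 1)) = real n + (real (x+k) - 1)" using assms by (simp add: of_nat_diff)
  have e3: "(2::real)^(n-1) * (1/2)^(n-1) = 1" by (simp add: power_one_over)
  show "real n * (coef y n k * ((1 / 2) ^ (x + k + n - 2 + 1) / real (x + k + n - 2 + 1))) =
        real (y-1 choose k) * (-1)^k * (1/2)^(x+k) * (real n / (real n + (real (x+k) - 1)))"
  proof -
    define D where "D = real n + (real (x+k) - 1)"
    have "real n * (coef y n k * ((1 / 2) ^ ((x + k) + (n - 1)) / real ((x + k) + (n - 1)))) =
       real n * (real (y-1 choose k) * (-1)^k * 2^(n-1) * ((1 / 2) ^ (x + k) * (1/2)^(n - 1) / D))"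
      unfolding e2 D_def coef_def power_add by simp
    also have "\<dots> = real (y-1 choose k) * (-1)^k * (1/2)^(x+k) * (real n / D) * (2^(n-1) * (1/2)^(n-1))"
      by (simp add: ac_simps)
    also have "\<dots> = real (y-1 choose k) * (-1)^k * (1/2)^(x+k) * (real n / D)"
      unfolding e3 by simp
    finally show ?thesis unfolding e1 D_def .
  qed
qed

lemma frac_lim: "(\<lambda>n::nat. real n / (real n + c)) \<longlonglongrightarrow> 1"
  by real_asymp

lemma binsum: "(\<Sum>k\<le>m. real (m choose k) * (-1)^k * (1/2)^(x+k)) = (1/2)^x * (1/2)^m"
proof -
  have "(1/2::real)^m = (-1/2 + 1)^m" by simp
  also have "\<dots> = (\<Sum>k\<le>m. real (m choose k) * (-1/2)^k * 1^(m-k))" by (rule binomial_ring)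
  finally have "(\<Sum>k\<le>m. real (m choose k) * (-1/2)^k) = (1/2::real)^m" by simp
  moreover have "real (m choose k) * (-1)^k * (1/2)^(x+k) = (1/2)^x * (real (m choose k) * (-1/2)^k)" for k
  proof -
    have "(-1/2::real)^k = (-1)^k * (1/2)^k" by (simp add: power_mult_distrib[symmetric])
    then show ?thesis by (simp add: power_add ac_simps)
  qed
  ultimately show ?thesis
  proof -
    assume h1: "(\<Sum>k\<le>m. real (m choose k) * (-1/2)^k) = (1/2::real)^m"
    assume h2: "\<And>k. real (m choose k) * (-1)^k * (1/2)^(x+k) = (1/2::real)^x * (real (m choose k) * (-1/2)^k)"
    have "(\<Sum>k\<le>m. real (m choose k) * (-1)^k * (1/2::real)^(x+k)) = (\<Sum>k\<le>m. (1/2)^x * (real (m choose k) * (-1/2)^k))"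
      by (rule sum.cong[OF refl]) (rule h2)
    also have "\<dots> = (1/2)^x * (\<Sum>k\<le>m. real (m choose k) * (-1/2)^k)"
      by (rule sum_distrib_left[symmetric])
    finally show ?thesis unfolding h1 .
  qed
qed

lemma nV_lim:
  assumes "x \<ge> 1"
  shows "(\<lambda>n. real n * V x y n) \<longlonglongrightarrow> (1/2)^x * (1/2)^(y-1)"
proof -
  have "(\<lambda>n. \<Sum>k\<le>y-1. real (y-1 choose k) * (-1)^k * (1/2)^(x+k) * (real n / (real n + (real (x+k) - 1))))
        \<longlonglongrightarrow> (\<Sum>k\<le>y-1. real (y-1 choose k) * (-1)^k * (1/2)^(x+k) * 1)"
    by (intro tendsto_sum tendsto_mult_left frac_lim)
  also have "(\<Sum>k\<le>y-1. real (y-1 choose k) * (-1)^k * (1/2)^(x+k) * 1) = (1/2)^x * (1/2)^(y-1)"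
    using binsum by simp
  finally have lim: "(\<lambda>n. \<Sum>k\<le>y-1. real (y-1 choose k) * (-1)^k * (1/2)^(x+k) * (real n / (real n + (real (x+k) - 1))))
        \<longlonglongrightarrow> (1/2)^x * (1/2)^(y-1)" .
  show ?thesis
    by (rule Lim_transform_eventually[OF lim]) (use V_simp[OF assms] in \<open>auto intro!: eventually_sequentiallyI[of 1]\<close>)
qed

theorem theorem3:
  fixes x0 y0 :: nat
  assumes "x0 \<ge> 1" and "y0 \<ge> 1"
  shows "(\<lambda>n::nat. measure noise {\<omega> \<in> space noise. num_ties 1 x0 y0 \<omega> \<ge> of_nat n})
           \<sim>[at_top] (\<lambda>n. 1 / (2 ^ (x0 + y0 - 2) * Beta (real x0) (real y0)) * (1 / real n))"
proof -
  define a where "a = max x0 y0"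
  define b where "b = min x0 y0"
  have ab: "b \<le> a" "b \<ge> 1" "a \<ge> 1" "a + b = x0 + y0" using assms by (auto simp: a_def b_def)
  have Bab: "Beta (real a) (real b) = Beta (real x0) (real y0)"
    by (cases "x0 \<le> y0") (auto simp: a_def b_def max_def min_def Beta_commute)
  have Pab: "Pn x0 y0 n = Pn a b n" for n
    by (cases "x0 \<le> y0") (auto simp: a_def b_def max_def min_def Pn_sym)
  define B where "B = Beta (real a) (real b)"
  have B: "B > 0" using Beta_pos[of a b] ab by (simp add: B_def)
  define M where "M = a + b - 2"
  have M: "a + b - 1 = M + 1" using ab by (simp add: M_def)
  have ratio: "Pn x0 y0 n / (1 / (2 ^ (x0 + y0 - 2) * Beta (real x0) (real y0)) * (1 / real n))
        = 2 * 2^M * (real n * V a b n)" if "n \<ge> 1" for n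
    using that B unfolding Pab Pn_formula[OF ab(1,2) that] Bab[symmetric] B_def[symmetric] ab(4)[symmetric] M_def[symmetric]
    by (simp add: field_simps)
  have "(\<lambda>n. 2 * 2^M * (real n * V a b n)) \<longlonglongrightarrow> 2 * 2^M * ((1/2)^a * (1/2)^(b-1))"
    by (intro tendsto_mult_left nV_lim ab)
  also have "2 * 2^M * ((1/2)^a * (1/2)^(b-1)) = (1::real)"
  proof -
    have "a + (b - 1) = M + 1" using ab by (simp add: M_def)
    then have "(1/2::real)^a * (1/2)^(b-1) = (1/2)^(M+1)" by (simp add: power_add[symmetric])
    then show ?thesis by (simp add: power_one_over)
  qed
  finally have lim: "(\<lambda>n. 2 * 2^M * (real n * V a b n)) \<longlonglongrightarrow> 1" .
  show ?thesis
  proof (rule asymp_equivI')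
    show "((\<lambda>n. measure noise {\<omega> \<in> space noise. num_ties 1 x0 y0 \<omega> \<ge> of_nat n} /
            (1 / (2 ^ (x0 + y0 - 2) * Beta (real x0) (real y0)) * (1 / real n))) \<longlongrightarrow> 1) at_top"
      by (rule Lim_transform_eventually[OF lim])
         (use ratio in \<open>auto simp: Pn_def intro!: eventually_sequentiallyI[of 1]\<close>)
  qed
qed


end
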